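(* Let $(X,f,q_X)$ and $(Y,g,q_Y)$ be partially observable systems and suppose there is a morphism $(m,n):(X,f,q_X)\to(Y,g,q_Y)$ in $\mathbf{PSys}$. Then $\tilde h(X,f,q_X)\geq \tilde h(Y,g,q_Y)$. Equivalently, the assignment $(X,f,q)\mapsto \tilde h(X,f,q)$ defines a functor from $\mathbf{PSys}$ to the ordered set $([0,\infty],\geq)$ viewed as a thin category.
   Context: A dynamical system is a pair $(X,f)$ with $X$ a compact Hausdorff space and $f:X\to X$ a continuous surjection. A partially observable system is a triple $(X,f,q_X)$ where $(X,f)$ is a dynamical system and $q_X:X\to\tilde X$ is a continuous surjection onto a compact Hausdorff space $\tilde X$. A morphism $(X,f,q_X)\to(Y,g,q_Y)$ in the category $\mathbf{PSys}$ is a pair $(m,n)$ of continuous surjections $m:X\to Y$, $n:\tilde X\to\tilde Y$ with $m\circ f=g\circ m$ and $n\circ q_X=q_Y\circ m$. For a sequence of positive numbers $x_t$, $\mathrm{GR}_t(x_t)=\limsup_{t\to\infty}\frac1t\ln x_t$. For an open cover $\mathcal C$, $\#\mathcal C$ is the minimal cardinality of a finite subcover, and $\mathcal A\vee\mathcal B=\{A\cap B\}_{A\in\mathcal A,B\in\mathcal B}$. The quotient-topological entropy is $\tilde h(X,f,q)=\sup\{\mathrm{GR}_n(\#\bigvee_{i=0}^n f^{-i}(q^{-1}\mathcal U)) : \mathcal U \text{ an open cover of } \tilde X\}$, i.e. the supremum over open covers of $X$ in the topology induced by $q$. *)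

theory Defs
  imports "HOL-Analysis.Analysis"
begin

definition compact_Hausdorff :: "'a topology \<Rightarrow> bool" where
  "compact_Hausdorff X \<longleftrightarrow> compact_space X \<and> Hausdorff_space X"

definition cont_surj :: "'a topology \<Rightarrow> 'b topology \<Rightarrow> ('a \<Rightarrow> 'b) \<Rightarrow> bool" where
  "cont_surj X Y h \<longleftrightarrow> continuous_map X Y h \<and> h ` topspace X = topspace Y"

definition dyn_sys :: "'a topology \<Rightarrow> ('a \<Rightarrow> 'a) \<Rightarrow> bool" where
  "dyn_sys X f \<longleftrightarrow> compact_Hausdorff X \<and> cont_surj X X f"

definition po_sys :: "'a topology \<Rightarrow> ('a \<Rightarrow> 'a) \<Rightarrow> 'b topology \<Rightarrow> ('a \<Rightarrow> 'b) \<Rightarrow> bool" where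
  "po_sys X f Xt q \<longleftrightarrow> dyn_sys X f \<and> compact_Hausdorff Xt \<and> cont_surj X Xt q"

definition psys_morphism ::
  "'a topology \<Rightarrow> ('a \<Rightarrow> 'a) \<Rightarrow> 'b topology \<Rightarrow> ('a \<Rightarrow> 'b) \<Rightarrow>
   'c topology \<Rightarrow> ('c \<Rightarrow> 'c) \<Rightarrow> 'd topology \<Rightarrow> ('c \<Rightarrow> 'd) \<Rightarrow>
   ('a \<Rightarrow> 'c) \<Rightarrow> ('b \<Rightarrow> 'd) \<Rightarrow> bool" where
  "psys_morphism X f Xt qX Y g Yt qY m n \<longleftrightarrow>
     cont_surj X Y m \<and> cont_surj Xt Yt n \<and>
     (\<forall>x\<in>topspace X. m (f x) = g (m x)) \<and>
     (\<forall>x\<in>topspace X. n (qX x) = qY (m x))"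

definition open_cover :: "'a topology \<Rightarrow> 'a set set \<Rightarrow> bool" where
  "open_cover X U \<longleftrightarrow> (\<forall>A\<in>U. openin X A) \<and> topspace X \<subseteq> \<Union>U"

definition cover_num :: "'a topology \<Rightarrow> 'a set set \<Rightarrow> nat" where
  "cover_num X C = Inf {card F | F. F \<subseteq> C \<and> finite F \<and> topspace X \<subseteq> \<Union>F}"

definition pre_iter :: "'a topology \<Rightarrow> ('a \<Rightarrow> 'a) \<Rightarrow> ('a \<Rightarrow> 'b) \<Rightarrow> nat \<Rightarrow> 'b set \<Rightarrow> 'a set" where
  "pre_iter X f q i A = {x \<in> topspace X. q ((f ^^ i) x) \<in> A}"

definition join_cover :: "'a topology \<Rightarrow> ('a \<Rightarrow> 'a) \<Rightarrow> ('a \<Rightarrow> 'b) \<Rightarrow> 'b set set \<Rightarrow> nat \<Rightarrow> 'a set set" where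
  "join_cover X f q U n =
     {topspace X \<inter> (\<Inter>i\<in>{0..n}. pre_iter X f q i (s i)) | s. \<forall>i\<in>{0..n}. s i \<in> U}"

definition growth_rate :: "(nat \<Rightarrow> real) \<Rightarrow> ereal" where
  "growth_rate x = limsup (\<lambda>t. ereal (ln (x t) / real t))"

definition qt_entropy :: "'a topology \<Rightarrow> ('a \<Rightarrow> 'a) \<Rightarrow> 'b topology \<Rightarrow> ('a \<Rightarrow> 'b) \<Rightarrow> ereal" where
  "qt_entropy X f Xt q =
     Sup {growth_rate (\<lambda>n. real (cover_num X (join_cover X f q U n))) | U. open_cover Xt U}"

end

theory Submission
  imports Defs
begin

lemma iter_cont:
  assumes "continuous_map X X f"
  shows "continuous_map X X (f ^^ i)"
proof (induction i)
  case 0 then show ?case by simp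
next
  case (Suc i)
  show ?case unfolding funpow.simps(2) by (rule continuous_map_compose[OF Suc.IH assms])
qed

lemma iter_top:
  assumes "continuous_map X X f" "x \<in> topspace X"
  shows "(f ^^ i) x \<in> topspace X"
  using continuous_map_image_subset_topspace[OF iter_cont[OF assms(1)]] assms(2) by blast

lemma iter_comm:
  assumes "continuous_map X X f" "\<forall>x\<in>topspace X. m (f x) = g (m x)" "x \<in> topspace X"
  shows "m ((f ^^ i) x) = (g ^^ i) (m x)"
proof (induction i)
  case 0 then show ?case by simp
next
  case (Suc i)
  have t: "(f ^^ i) x \<in> topspace X" by (rule iter_top[OF assms(1,3)])
  have "m ((f ^^ Suc i) x) = m (f ((f ^^ i) x))" by simp
  also have "\<dots> = g (m ((f ^^ i) x))" using assms(2) t by blast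
  also have "\<dots> = g ((g ^^ i) (m x))" using Suc.IH by simp
  finally show ?case by simp
qed

lemma cover_set_nonempty:
  assumes "po_sys X f Xt q" "open_cover Xt U"
  shows "\<exists>F. F \<subseteq> join_cover X f q U k \<and> finite F \<and> topspace X \<subseteq> \<Union>F"
proof -
  have cs: "compact_space X" and cf: "continuous_map X X f" and cq: "continuous_map X Xt q"
    and qs: "q ` topspace X = topspace Xt"
    using assms(1) unfolding po_sys_def dyn_sys_def compact_Hausdorff_def cont_surj_def by blast+
  have op: "openin X W" if Wm: "W \<in> join_cover X f q U k" for W
  proof -
    obtain s where s: "\<forall>i\<in>{0..k}. s i \<in> U"
      and W: "W = topspace X \<inter> (\<Inter>i\<in>{0..k}. pre_iter X f q i (s i))"
      using Wm unfolding join_cover_def by blast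
    have "openin X (pre_iter X f q i (s i))" if "i \<in> {0..k}" for i
    proof -
      have c: "continuous_map X Xt (q \<circ> (f ^^ i))" by (rule continuous_map_compose[OF iter_cont[OF cf] cq])
      have "openin Xt (s i)" using s that assms(2) unfolding open_cover_def by blast
      then have "openin X {x \<in> topspace X. (q \<circ> (f ^^ i)) x \<in> s i}"
        by (rule openin_continuous_map_preimage[OF c])
      then show ?thesis unfolding pre_iter_def by simp
    qed
    then have "openin X ((\<Inter>i\<in>{0..k}. pre_iter X f q i (s i)) \<inter> topspace X)"
      by (intro openin_INT) auto
    then show ?thesis using W by (simp add: Int_commute)
  qed
  have cov: "topspace X \<subseteq> \<Union>(join_cover X f q U k)"
  proof
    fix x assume x: "x \<in> topspace X"
    have "\<forall>i. \<exists>A. A \<in> U \<and> q ((f ^^ i) x) \<in> A"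
    proof
      fix i
      have "q ((f ^^ i) x) \<in> topspace Xt" using qs iter_top[OF cf x] by blast
      then show "\<exists>A. A \<in> U \<and> q ((f ^^ i) x) \<in> A" using assms(2) unfolding open_cover_def by blast
    qed
    then have "\<exists>s. \<forall>i. s i \<in> U \<and> q ((f ^^ i) x) \<in> s i" by (rule choice)
    then obtain s where s0: "\<forall>i. s i \<in> U \<and> q ((f ^^ i) x) \<in> s i" by (rule exE)
    then have s: "\<And>i. s i \<in> U \<and> q ((f ^^ i) x) \<in> s i" by blast
    have "topspace X \<inter> (\<Inter>i\<in>{0..k}. pre_iter X f q i (s i)) \<in> join_cover X f q U k"
      unfolding join_cover_def using s by blast
    moreover have "x \<in> topspace X \<inter> (\<Inter>i\<in>{0..k}. pre_iter X f q i (s i))"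
      using x s unfolding pre_iter_def by auto
    ultimately show "x \<in> \<Union>(join_cover X f q U k)" by blast
  qed
  have "\<forall>\<U>. (\<forall>U \<in> \<U>. openin X U) \<and> topspace X \<subseteq> \<Union>\<U>
            \<longrightarrow> (\<exists>\<F>. finite \<F> \<and> \<F> \<subseteq> \<U> \<and> topspace X \<subseteq> \<Union>\<F>)"
    using cs unfolding compact_space_alt .
  then have "(\<forall>W \<in> join_cover X f q U k. openin X W) \<and> topspace X \<subseteq> \<Union>(join_cover X f q U k)
            \<longrightarrow> (\<exists>\<F>. finite \<F> \<and> \<F> \<subseteq> join_cover X f q U k \<and> topspace X \<subseteq> \<Union>\<F>)"
    by (rule spec)
  moreover have "(\<forall>W \<in> join_cover X f q U k. openin X W) \<and> topspace X \<subseteq> \<Union>(join_cover X f q U k)"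
    using op cov by blast
  ultimately have "\<exists>\<F>. finite \<F> \<and> \<F> \<subseteq> join_cover X f q U k \<and> topspace X \<subseteq> \<Union>\<F>"
    by (rule mp)
  then show ?thesis by blast
qed

lemma cover_num_pos:
  assumes "po_sys X f Xt q" "open_cover Xt U" "topspace X \<noteq> {}"
  shows "cover_num X (join_cover X f q U k) > 0"
proof -
  let ?S = "{card F | F. F \<subseteq> join_cover X f q U k \<and> finite F \<and> topspace X \<subseteq> \<Union>F}"
  from cover_set_nonempty[OF assms(1,2), of k]
  obtain F0 where F0: "F0 \<subseteq> join_cover X f q U k \<and> finite F0 \<and> topspace X \<subseteq> \<Union>F0"
    by (rule exE)
  have "card F0 \<in> ?S"
    by (rule CollectI, rule exI[of _ F0], rule conjI[OF refl F0])
  then have "?S \<noteq> {}" by (rule ex_in_conv[THEN iffD1, OF exI])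
  then have "Inf ?S \<in> ?S" by (rule Inf_nat_def1)
  then have "\<exists>F. Inf ?S = card F \<and> F \<subseteq> join_cover X f q U k \<and> finite F \<and> topspace X \<subseteq> \<Union>F"
    by (simp only: mem_Collect_eq)
  then obtain F where F: "Inf ?S = card F" "finite F" "topspace X \<subseteq> \<Union>F" by blast
  have "F \<noteq> {}" using assms(3) F(3) by blast
  then have "card F > 0" using F(2) by (simp add: card_gt_0_iff)
  then show ?thesis unfolding cover_num_def F(1) .
qed

lemma cover_num_empty:
  assumes "topspace X = {}"
  shows "cover_num X C = 0"
proof -
  have "0 \<in> {card F | F. F \<subseteq> C \<and> finite F \<and> topspace X \<subseteq> \<Union>F}"
    using assms by (intro CollectI exI[of _ "{}"]) simp
  then have "cover_num X C \<le> 0" unfolding cover_num_def by (rule cInf_lower) simp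
  then show ?thesis by simp
qed

lemma pull_cover:
  assumes cn: "continuous_map Xt Yt n" and ns: "n ` topspace Xt = topspace Yt" and V: "open_cover Yt V"
  shows "open_cover Xt ((\<lambda>B. {b \<in> topspace Xt. n b \<in> B}) ` V)"
  unfolding open_cover_def
proof (intro conjI ballI subsetI)
  fix A assume "A \<in> (\<lambda>B. {b \<in> topspace Xt. n b \<in> B}) ` V"
  then obtain B where B: "B \<in> V" and A: "A = {b \<in> topspace Xt. n b \<in> B}" by (rule imageE)
  have "openin Yt B" using V B unfolding open_cover_def by blast
  then show "openin Xt A" unfolding A by (rule openin_continuous_map_preimage[OF cn])
next
  fix b assume b: "b \<in> topspace Xt"
  then have "n b \<in> topspace Yt" using ns by blast
  then obtain B where "B \<in> V" "n b \<in> B" using V unfolding open_cover_def by blast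
  then show "b \<in> \<Union>((\<lambda>B. {b \<in> topspace Xt. n b \<in> B}) ` V)" using b by blast
qed

theorem mainTheorem1:
  fixes X :: "'a topology" and f :: "'a \<Rightarrow> 'a" and Xt :: "'b topology" and qX :: "'a \<Rightarrow> 'b"
    and Y :: "'c topology" and g :: "'c \<Rightarrow> 'c" and Yt :: "'d topology" and qY :: "'c \<Rightarrow> 'd"
    and m :: "'a \<Rightarrow> 'c" and n :: "'b \<Rightarrow> 'd"
  assumes "po_sys X f Xt qX"
    and "po_sys Y g Yt qY"
    and "psys_morphism X f Xt qX Y g Yt qY m n"
  shows "qt_entropy X f Xt qX \<ge> qt_entropy Y g Yt qY"
proof -
  have cf: "continuous_map X X f" and cq: "continuous_map X Xt qX"
    and qs: "qX ` topspace X = topspace Xt"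
    using assms(1) unfolding po_sys_def dyn_sys_def compact_Hausdorff_def cont_surj_def by blast+
  have cm: "continuous_map X Y m" and ms: "m ` topspace X = topspace Y"
    and cn: "continuous_map Xt Yt n" and ns: "n ` topspace Xt = topspace Yt"
    and fg: "\<forall>x\<in>topspace X. m (f x) = g (m x)"
    and nq: "\<forall>x\<in>topspace X. n (qX x) = qY (m x)"
    using assms(3) unfolding psys_morphism_def cont_surj_def by blast+
  have key: "growth_rate (\<lambda>k. real (cover_num Y (join_cover Y g qY V k)))
     \<le> growth_rate (\<lambda>k. real (cover_num X (join_cover X f qX U k)))"
    if V: "open_cover Yt V" and Udef: "U = (\<lambda>B. {b \<in> topspace Xt. n b \<in> B}) ` V" for V U
  proof -
    have U: "open_cover Xt U"
      unfolding Udef by (rule pull_cover[OF cn ns V])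
    define \<phi> where "\<phi> W = {x \<in> topspace X. m x \<in> W}" for W
    have phi_eq: "\<phi> (topspace Y \<inter> (\<Inter>i\<in>{0..k}. pre_iter Y g qY i (s i)))
        = topspace X \<inter> (\<Inter>i\<in>{0..k}. pre_iter X f qX i {b \<in> topspace Xt. n b \<in> s i})"
      for s k
    proof (intro set_eqI iffI)
      fix x assume x: "x \<in> \<phi> (topspace Y \<inter> (\<Inter>i\<in>{0..k}. pre_iter Y g qY i (s i)))"
      then have xt: "x \<in> topspace X" unfolding \<phi>_def by auto
      show "x \<in> topspace X \<inter> (\<Inter>i\<in>{0..k}. pre_iter X f qX i {b \<in> topspace Xt. n b \<in> s i})"
        using x iter_top[OF cf xt] iter_comm[OF cf fg xt] nq cq xt
        unfolding \<phi>_def pre_iter_def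
        by (auto simp: continuous_map_def)
    next
      fix x assume x: "x \<in> topspace X \<inter> (\<Inter>i\<in>{0..k}. pre_iter X f qX i {b \<in> topspace Xt. n b \<in> s i})"
      then have xt: "x \<in> topspace X" by auto
      show "x \<in> \<phi> (topspace Y \<inter> (\<Inter>i\<in>{0..k}. pre_iter Y g qY i (s i)))"
        using x iter_top[OF cf xt] iter_comm[OF cf fg xt] nq ms xt
        unfolding \<phi>_def pre_iter_def
        by auto
    qed
    have phi_ex: "\<exists>W \<in> join_cover Y g qY V k. \<phi> W = Z" if Zm: "Z \<in> join_cover X f qX U k" for Z k
    proof -
      obtain s' where s': "\<forall>i\<in>{0..k}. s' i \<in> U"
        and Z: "Z = topspace X \<inter> (\<Inter>i\<in>{0..k}. pre_iter X f qX i (s' i))"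
        using Zm unfolding join_cover_def by blast
      have "\<forall>i\<in>{0..k}. \<exists>B. B \<in> V \<and> s' i = {b \<in> topspace Xt. n b \<in> B}"
        using s' unfolding Udef by blast
      then have "\<exists>s. \<forall>i\<in>{0..k}. s i \<in> V \<and> s' i = {b \<in> topspace Xt. n b \<in> s i}"
        by (rule bchoice)
      then obtain s where s0: "\<forall>i\<in>{0..k}. s i \<in> V \<and> s' i = {b \<in> topspace Xt. n b \<in> s i}"
        by (rule exE)
      then have s: "\<And>i. i \<in> {0..k} \<Longrightarrow> s i \<in> V \<and> s' i = {b \<in> topspace Xt. n b \<in> s i}"
        by blast
      have "Z = topspace X \<inter> (\<Inter>i\<in>{0..k}. pre_iter X f qX i {b \<in> topspace Xt. n b \<in> s i})"
        unfolding Z using s by (intro arg_cong2[where f="(\<inter>)"] refl INF_cong) auto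
      then have "\<phi> (topspace Y \<inter> (\<Inter>i\<in>{0..k}. pre_iter Y g qY i (s i))) = Z"
        using phi_eq by simp
      moreover have "topspace Y \<inter> (\<Inter>i\<in>{0..k}. pre_iter Y g qY i (s i)) \<in> join_cover Y g qY V k"
        unfolding join_cover_def using s by blast
      ultimately show ?thesis by blast
    qed
    have le: "cover_num Y (join_cover Y g qY V k) \<le> cover_num X (join_cover X f qX U k)" for k
    proof -
      let ?S = "{card F | F. F \<subseteq> join_cover X f qX U k \<and> finite F \<and> topspace X \<subseteq> \<Union>F}"
      from cover_set_nonempty[OF assms(1) U, of k]
      obtain F0 where F0: "F0 \<subseteq> join_cover X f qX U k \<and> finite F0 \<and> topspace X \<subseteq> \<Union>F0"
        by (rule exE)
      have "card F0 \<in> ?S"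
        by (rule CollectI, rule exI[of _ F0], rule conjI[OF refl F0])
      then have "?S \<noteq> {}" by (rule ex_in_conv[THEN iffD1, OF exI])
      then have "Inf ?S \<in> ?S" by (rule Inf_nat_def1)
      then have "\<exists>F. Inf ?S = card F \<and> F \<subseteq> join_cover X f qX U k \<and> finite F \<and> topspace X \<subseteq> \<Union>F"
        by (simp only: mem_Collect_eq)
      then obtain F where F: "Inf ?S = card F" "finite F" "topspace X \<subseteq> \<Union>F"
        "F \<subseteq> join_cover X f qX U k" by blast
      have "\<forall>Z\<in>F. \<exists>W. W \<in> join_cover Y g qY V k \<and> \<phi> W = Z"
      proof
        fix Z assume "Z \<in> F"
        then have "Z \<in> join_cover X f qX U k" by (rule subsetD[OF F(4)])
        from phi_ex[OF this] show "\<exists>W. W \<in> join_cover Y g qY V k \<and> \<phi> W = Z" by (rule bexE) (rule exI, rule conjI)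
      qed
      then have "\<exists>\<psi>. \<forall>Z\<in>F. \<psi> Z \<in> join_cover Y g qY V k \<and> \<phi> (\<psi> Z) = Z"
        by (rule bchoice)
      then obtain \<psi> where psi0: "\<forall>Z\<in>F. \<psi> Z \<in> join_cover Y g qY V k \<and> \<phi> (\<psi> Z) = Z"
        by (rule exE)
      then have psi: "\<And>Z. Z \<in> F \<Longrightarrow> \<psi> Z \<in> join_cover Y g qY V k \<and> \<phi> (\<psi> Z) = Z" by blast
      have "\<psi> ` F \<subseteq> join_cover Y g qY V k" using psi by blast
      moreover have "topspace Y \<subseteq> \<Union>(\<psi> ` F)"
      proof
        fix y assume "y \<in> topspace Y"
        then obtain x where x: "x \<in> topspace X" "y = m x" using ms by blast
        then obtain Z where Z: "Z \<in> F" "x \<in> Z" using F(3) by blast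
        then have "x \<in> \<phi> (\<psi> Z)" using psi by simp
        then show "y \<in> \<Union>(\<psi> ` F)" using Z x unfolding \<phi>_def by blast
      qed
      ultimately have "card (\<psi> ` F) \<in> {card F | F. F \<subseteq> join_cover Y g qY V k \<and> finite F \<and> topspace Y \<subseteq> \<Union>F}"
        using F(2) by (intro CollectI exI[of _ "\<psi> ` F"]) simp
      then have "cover_num Y (join_cover Y g qY V k) \<le> card (\<psi> ` F)"
        unfolding cover_num_def by (rule cInf_lower) simp
      also have "\<dots> \<le> card F" using F(2) by (rule card_image_le)
      finally have "cover_num Y (join_cover Y g qY V k) \<le> card F" .
      moreover have "cover_num X (join_cover X f qX U k) = card F" unfolding cover_num_def by (rule F(1))
      ultimately show ?thesis by (simp only:)
    qed
    show ?thesis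
    proof (cases "topspace X = {}")
      case True
      then have "topspace Y = {}" using ms by auto
      have z1: "cover_num X (join_cover X f qX U k) = 0" for k
        using True by (rule cover_num_empty)
      have z2: "cover_num Y (join_cover Y g qY V k) = 0" for k
        using \<open>topspace Y = {}\<close> by (rule cover_num_empty)
      show ?thesis by (simp add: z1 z2)
    next
      case False
      have pos: "cover_num Y (join_cover Y g qY V k) > 0" for k
      proof -
        from False obtain x where "x \<in> topspace X" by blast
        then have "m x \<in> topspace Y" using ms by blast
        then have "topspace Y \<noteq> {}" by blast
        then show ?thesis by (rule cover_num_pos[OF assms(2) V])
      qed
      show ?thesis unfolding growth_rate_def
      proof (rule Limsup_mono, rule always_eventually, intro allI)
        fix k
        have "ln (real (cover_num Y (join_cover Y g qY V k))) \<le> ln (real (cover_num X (join_cover X f qX U k)))"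
        proof (rule ln_mono)
          show "real (cover_num Y (join_cover Y g qY V k)) \<le> real (cover_num X (join_cover X f qX U k))"
            using le[of k] by (rule of_nat_mono)
          show "0 < real (cover_num Y (join_cover Y g qY V k))" using pos[of k] by (rule of_nat_0_less_iff[THEN iffD2])
        qed
        then have "ln (real (cover_num Y (join_cover Y g qY V k))) / real k \<le> ln (real (cover_num X (join_cover X f qX U k))) / real k"
          by (rule divide_right_mono) simp
        then show "ereal (ln (real (cover_num Y (join_cover Y g qY V k))) / real k)
            \<le> ereal (ln (real (cover_num X (join_cover X f qX U k))) / real k)"
          by (simp only: ereal_less_eq)
      qed
    qed
  qed
  show ?thesis
    unfolding qt_entropy_def
  proof (rule Sup_least)
    fix y assume "y \<in> {growth_rate (\<lambda>k. real (cover_num Y (join_cover Y g qY V k))) | V. open_cover Yt V}"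
    then have "\<exists>V. y = growth_rate (\<lambda>k. real (cover_num Y (join_cover Y g qY V k))) \<and> open_cover Yt V"
      by (simp only: mem_Collect_eq)
    then obtain V where "y = growth_rate (\<lambda>k. real (cover_num Y (join_cover Y g qY V k))) \<and> open_cover Yt V"
      by (rule exE)
    then have V: "open_cover Yt V" and y: "y = growth_rate (\<lambda>k. real (cover_num Y (join_cover Y g qY V k)))"
      by simp_all
    define U where "U = (\<lambda>B. {b \<in> topspace Xt. n b \<in> B}) ` V"
    have U: "open_cover Xt U"
      unfolding U_def by (rule pull_cover[OF cn ns V])
    have "y \<le> growth_rate (\<lambda>k. real (cover_num X (join_cover X f qX U k)))"
      unfolding y by (rule key[OF V U_def])
    also have "\<dots> \<le> Sup {growth_rate (\<lambda>k. real (cover_num X (join_cover X f qX U k))) | U. open_cover Xt U}"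
      by (rule Sup_upper, rule CollectI, rule exI[of _ U], rule conjI[OF refl U])
    finally show "y \<le> \<dots>" .
  qed
qed

end
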